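(* Let $G$ be a connected simple graph without bridges whose edge set is identified with $[d+1]$, let $B_1,\dots,B_n$ be the bases (spanning trees) of its graphic matroid, all of cardinality $k$, and let $P=\operatorname{tconv}\{-e_{B_1},\dots,-e_{B_n}\}\subseteq\mathbb{T}^d$ with $V=(-e_{B_1},\dots,-e_{B_n})$. Then the set of coarse types of the maximal cells of the tropical complex $\mathcal{C}_V$ is exactly the set of tuples $(t_1,\dots,t_{d+1})$ obtained as follows: choose an integer $d'\in\{0,1,\dots,d-k+1\}$ and pairwise distinct elements $i_1,i_2,\dots,i_{d'+1}\in[d+1]$ such that $[d+1]\setminus\{i_1,\dots,i_{d'}\}$ contains a basis of the matroid, and set $$t_j=\begin{cases} b_{\{i_1\},\emptyset}+b_{\emptyset,\{i_1,i_2,\dots,i_{d'+1}\}} & \text{if } j=i_1,\\ b_{\{i_l\},\{i_1,\dots,i_{l-1}\}} & \text{if } j=i_l \text{ with } 2\le l\le d'+1,\\ 0 & \text{otherwise.}\end{cases}$$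
   Context: Tropical arithmetic is min-plus: $a\oplus b=\min(a,b)$, $a\odot b=a+b$, extended componentwise on $\mathbb{R}^{d+1}$ (with $\lambda\odot x=(\lambda+x_1,\dots,\lambda+x_{d+1})$). The tropical torus is $\mathbb{T}^d=\mathbb{R}^{d+1}/\mathbb{R}(1,\dots,1)$. The tropical convex hull of $v_1,\dots,v_n$ is $\operatorname{tconv}\{v_1,\dots,v_n\}=\{\bigoplus_l \lambda_l\odot v_l:\lambda_l\in\mathbb{R}\}$. For $B\subseteq[d+1]$, $e_B=\sum_{i\in B}e_i$ where $e_i$ are the unit vectors of $\mathbb{R}^{d+1}$. For $m\in[d+1]$ let $\bar S_m=\{\xi\in\mathbb{T}^d:\xi_m=\min_i\xi_i\}$. For $V=(v_1,\dots,v_n)$ and $x\in\mathbb{T}^d$, the (fine) type is $\operatorname{type}_V(x)=(T_1,\dots,T_{d+1})$ with $T_m=\{l\in[n]: v_l\in x+\bar S_m\}$. The cells $\{x:\operatorname{type}_V(x)=\mathcal{T}\}$ are relatively open polyhedra, and their closures form a polyhedral subdivision $\mathcal{C}_V$ of $\mathbb{T}^d$, the tropical complex; maximal cells are the inclusion-maximal (full-dimensional) ones. The coarse type of a point is $(|T_1|,\dots,|T_{d+1}|)$, and the coarse type of a cell is the coarse type of its relative interior points. For $I,J\subseteq[d+1]$, $b_{I,J}$ denotes the number of bases $B$ of the matroid with $I\subseteq B$ and $J\cap B=\emptyset$. *)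

theory Defs
  imports "HOL-Analysis.Analysis"
begin

text \<open>A graph is given by a finite vertex set Vs and an endpoint map ends :: 'e => 'v set;
  the edge set is UNIV :: 'e set, identified with [d+1] where d+1 = CARD('e).\<close>

definition simple_graph :: "'v set \<Rightarrow> ('e \<Rightarrow> 'v set) \<Rightarrow> bool" where
  "simple_graph Vs ends \<longleftrightarrow> finite Vs \<and>
     (\<forall>e. ends e \<subseteq> Vs \<and> card (ends e) = 2) \<and> inj ends"

definition reach :: "('e \<Rightarrow> 'v set) \<Rightarrow> 'e set \<Rightarrow> 'v \<Rightarrow> 'v \<Rightarrow> bool" where
  "reach ends F = (\<lambda>a b. \<exists>e\<in>F. ends e = {a, b})\<^sup>*\<^sup>*"

definition connected_graph :: "'v set \<Rightarrow> ('e \<Rightarrow> 'v set) \<Rightarrow> bool" where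
  "connected_graph Vs ends \<longleftrightarrow> Vs \<noteq> {} \<and> (\<forall>u\<in>Vs. \<forall>v\<in>Vs. reach ends UNIV u v)"

definition is_bridge :: "('e \<Rightarrow> 'v set) \<Rightarrow> 'e \<Rightarrow> bool" where
  "is_bridge ends e \<longleftrightarrow> (\<exists>u v. ends e = {u, v} \<and> \<not> reach ends (UNIV - {e}) u v)"

text \<open>Independent sets of the graphic matroid: cycle-free edge sets (no edge of F
  lies on a cycle in F, i.e. its endpoints are not joined by a path in F minus it).\<close>
definition acyclic_edges :: "('e \<Rightarrow> 'v set) \<Rightarrow> 'e set \<Rightarrow> bool" where
  "acyclic_edges ends F \<longleftrightarrow>
     (\<forall>e\<in>F. \<forall>u v. ends e = {u, v} \<longrightarrow> \<not> reach ends (F - {e}) u v)"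

definition graphic_basis :: "('e \<Rightarrow> 'v set) \<Rightarrow> 'e set \<Rightarrow> bool" where
  "graphic_basis ends B \<longleftrightarrow> acyclic_edges ends B \<and>
     (\<forall>B'. acyclic_edges ends B' \<and> B \<subseteq> B' \<longrightarrow> B' = B)"

definition bcount :: "('e \<Rightarrow> 'v set) \<Rightarrow> 'e set \<Rightarrow> 'e set \<Rightarrow> nat" where
  "bcount ends I J = card {B. graphic_basis ends B \<and> I \<subseteq> B \<and> J \<inter> B = {}}"

text \<open>Points of T^d are represented by points of R^{d+1} = real^'e; all notions below are
  invariant under adding multiples of (1,...,1), so the cells are the preimages of the
  cells in T^d.\<close>

definition e_set :: "'e set \<Rightarrow> real ^ 'e" where
  "e_set B = (\<chi> i. if i \<in> B then 1 else 0)"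

definition in_sector :: "real ^ 'e \<Rightarrow> real ^ 'e \<Rightarrow> 'e \<Rightarrow> bool" where
  "in_sector v x m \<longleftrightarrow> (\<forall>i. (v - x) $ m \<le> (v - x) $ i)"

definition ftype :: "'b set \<Rightarrow> ('b \<Rightarrow> real ^ 'e) \<Rightarrow> real ^ 'e \<Rightarrow> 'e \<Rightarrow> 'b set" where
  "ftype N v x m = {l \<in> N. in_sector (v l) x m}"

definition ctype :: "'b set \<Rightarrow> ('b \<Rightarrow> real ^ 'e) \<Rightarrow> real ^ 'e \<Rightarrow> 'e \<Rightarrow> nat" where
  "ctype N v x = (\<lambda>m. card (ftype N v x m))"

definition trop_cell :: "'b set \<Rightarrow> ('b \<Rightarrow> real ^ 'e) \<Rightarrow> (real ^ 'e) set \<Rightarrow> bool" where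
  "trop_cell N v C \<longleftrightarrow> (\<exists>x. C = closure {y. ftype N v y = ftype N v x})"

definition max_trop_cell :: "'b set \<Rightarrow> ('b \<Rightarrow> real ^ 'e) \<Rightarrow> (real ^ 'e) set \<Rightarrow> bool" where
  "max_trop_cell N v C \<longleftrightarrow> trop_cell N v C \<and> \<not> (\<exists>C'. trop_cell N v C' \<and> C \<subset> C')"

text \<open>Coarse types of maximal cells (coarse type of a cell = coarse type of its relative
  interior points).\<close>
definition max_cell_ctypes :: "'b set \<Rightarrow> ('b \<Rightarrow> real ^ 'e) \<Rightarrow> ('e \<Rightarrow> nat) set" where
  "max_cell_ctypes N v =
     {ctype N v x | x C. max_trop_cell N v C \<and> x \<in> rel_interior C}"

end

theory Submission
  imports Defs
begin



definition XX :: "'b set \<Rightarrow> ('b \<Rightarrow> real ^ 'e) \<Rightarrow> real ^ 'e \<Rightarrow> (real ^ 'e) set" where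
  "XX N v y = {z. \<forall>m. ftype N v y m \<subseteq> ftype N v z m}"

lemma ex_argmin:
  fixes f :: "'e::finite \<Rightarrow> real"
  shows "\<exists>m. \<forall>i. f m \<le> f i"
proof -
  have "Min (range f) \<in> range f" by (intro Min_in) auto
  then obtain m where "f m = Min (range f)" by (metis rangeE)
  show ?thesis
  proof (intro exI allI)
    fix i show "f m \<le> f i" unfolding \<open>f m = Min (range f)\<close> by (rule Min_le) auto
  qed
qed

lemma ex_sector:
  fixes x :: "real ^ 'e::finite"
  assumes "l \<in> N"
  shows "\<exists>m. l \<in> ftype N v x m"
  using ex_argmin[of "\<lambda>i. (v l - x) $ i"] assms
  unfolding ftype_def in_sector_def by auto

lemma closed_XX: "closed (XX N v (y :: real ^ 'e::finite))"
proof -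
  have "XX N v y = (\<Inter>m. \<Inter>l\<in>ftype N v y m. \<Inter>i. {z. (v l - z) $ m \<le> (v l - z) $ i})"
    unfolding XX_def ftype_def in_sector_def by auto
  also have "closed \<dots>"
  proof (intro closed_INT ballI)
    fix m l i
    show "closed {z. (v l - z) $ m \<le> (v l - z) $ i}"
      by (intro closed_Collect_le continuous_intros)
  qed
  finally show ?thesis .
qed

lemma XX_self: "y \<in> XX N v y" unfolding XX_def by auto

lemma closure_cell:
  fixes y :: "real ^ 'e::finite"
  shows "closure {z. ftype N v z = ftype N v y} = XX N v y"
proof
  show "closure {z. ftype N v z = ftype N v y} \<subseteq> XX N v y"
    by (intro closure_minimal closed_XX) (auto simp: XX_def)
next
  show "XX N v y \<subseteq> closure {z. ftype N v z = ftype N v y}"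
  proof
    fix z assume z: "z \<in> XX N v y"
    have seg: "ftype N v (z + t *\<^sub>R (y - z)) = ftype N v y" if t: "0 < t" "t \<le> 1" for t
    proof (intro ext set_eqI iffI)
      fix m l
      let ?p = "z + t *\<^sub>R (y - z)"
      have comp: "(v l - ?p) $ q = (1 - t) * (v l - z) $ q + t * (v l - y) $ q" for q
        by (simp add: algebra_simps)
      assume l: "l \<in> ftype N v y m"
      then have lz: "l \<in> ftype N v z m" using z unfolding XX_def by auto
      show "l \<in> ftype N v ?p m"
        unfolding ftype_def in_sector_def
      proof (intro CollectI conjI allI)
        show "l \<in> N" using l unfolding ftype_def by auto
        fix i
        have a: "(v l - z) $ m \<le> (v l - z) $ i" using lz unfolding ftype_def in_sector_def by auto
        have b: "(v l - y) $ m \<le> (v l - y) $ i" using l unfolding ftype_def in_sector_def by auto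
        have "(1 - t) * (v l - z) $ m \<le> (1 - t) * (v l - z) $ i" using a t by (intro mult_left_mono) auto
        moreover have "t * (v l - y) $ m \<le> t * (v l - y) $ i" using b t by (intro mult_left_mono) auto
        ultimately show "(v l - ?p) $ m \<le> (v l - ?p) $ i" unfolding comp by linarith
      qed
    next
      fix m l
      let ?p = "z + t *\<^sub>R (y - z)"
      have comp: "(v l - ?p) $ q = (1 - t) * (v l - z) $ q + t * (v l - y) $ q" for q
        by (simp add: algebra_simps)
      assume l: "l \<in> ftype N v ?p m"
      then have lN: "l \<in> N" unfolding ftype_def by auto
      show "l \<in> ftype N v y m"
      proof (rule ccontr)
        assume nl: "l \<notin> ftype N v y m"
        obtain i where i: "l \<in> ftype N v y i" using ex_sector[OF lN] by blast
        then have iz: "l \<in> ftype N v z i" using z unfolding XX_def by auto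
        have "\<exists>j. (v l - y) $ m > (v l - y) $ j" using nl lN unfolding ftype_def in_sector_def by (auto simp: not_le)
        then obtain j where j: "(v l - y) $ m > (v l - y) $ j" by blast
        have "(v l - y) $ i \<le> (v l - y) $ j" using i unfolding ftype_def in_sector_def by auto
        with j have s: "(v l - y) $ i < (v l - y) $ m" by linarith
        have a: "(v l - z) $ i \<le> (v l - z) $ m" using iz unfolding ftype_def in_sector_def by auto
        have "(1 - t) * (v l - z) $ i \<le> (1 - t) * (v l - z) $ m" using a t by (intro mult_left_mono) auto
        moreover have "t * (v l - y) $ i < t * (v l - y) $ m" using s t by auto
        ultimately have "(v l - ?p) $ i < (v l - ?p) $ m" unfolding comp by linarith
        moreover have "(v l - ?p) $ m \<le> (v l - ?p) $ i" using l unfolding ftype_def in_sector_def by auto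
        ultimately show False by linarith
      qed
    qed
    show "z \<in> closure {z. ftype N v z = ftype N v y}"
      unfolding closure_approachable
    proof (intro allI impI)
      fix e :: real assume e: "e > 0"
      define t where "t = min 1 (e / (2 * (norm (y - z) + 1)))"
      have "2 * (norm (y - z) + 1) > 0" by (simp add: add_nonneg_pos)
      then have t0: "0 < t" "t \<le> 1" using e by (auto simp: t_def intro!: divide_pos_pos)
      have "0 \<le> e / (2 * (norm (y - z) + 1))" using e by simp
      then have "t * norm (y - z) \<le> (e / (2 * (norm (y - z) + 1))) * (norm (y - z) + 1)"
        by (intro mult_mono) (auto simp: t_def)
      also have "\<dots> = e / 2" 
      proof -
        have "norm (y - z) + 1 \<noteq> 0" by (metis add_nonneg_pos norm_ge_zero zero_less_one less_irrefl)
        then show ?thesis by (simp add: field_simps)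
      qed
      finally have "t * norm (y - z) < e" using e by linarith
      then have "dist (z + t *\<^sub>R (y - z)) z < e" using t0 by (simp add: dist_norm)
      with seg[OF t0] show "\<exists>p\<in>{z. ftype N v z = ftype N v y}. dist p z < e" by blast
    qed
  qed
qed

lemma convex_XX: "convex (XX N v (y :: real ^ 'e::finite))"
  unfolding convex_def
proof (intro ballI allI impI)
  fix a b and u w :: real
  assume a: "a \<in> XX N v y" and b: "b \<in> XX N v y" and uw: "0 \<le> u" "0 \<le> w" "u + w = 1"
  show "u *\<^sub>R a + w *\<^sub>R b \<in> XX N v y"
    unfolding XX_def
  proof (intro CollectI allI subsetI)
    fix m l assume l: "l \<in> ftype N v y m"
    have la: "l \<in> ftype N v a m" and lb: "l \<in> ftype N v b m" using a b l unfolding XX_def by auto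
    have comp: "(v l - (u *\<^sub>R a + w *\<^sub>R b)) $ q = u * (v l - a) $ q + w * (v l - b) $ q" for q
    proof -
      have "(v l) $ q = u * (v l) $ q + w * (v l) $ q" using uw(3) by (metis distrib_right mult_1)
      then show ?thesis by (simp add: algebra_simps)
    qed
    show "l \<in> ftype N v (u *\<^sub>R a + w *\<^sub>R b) m"
      unfolding ftype_def in_sector_def
    proof (intro CollectI conjI allI)
      show "l \<in> N" using l unfolding ftype_def by auto
      fix i
      have "u * (v l - a) $ m \<le> u * (v l - a) $ i" using la uw unfolding ftype_def in_sector_def
        by (intro mult_left_mono) auto
      moreover have "w * (v l - b) $ m \<le> w * (v l - b) $ i" using lb uw unfolding ftype_def in_sector_def
        by (intro mult_left_mono) auto
      ultimately show "(v l - (u *\<^sub>R a + w *\<^sub>R b)) $ m \<le> (v l - (u *\<^sub>R a + w *\<^sub>R b)) $ i"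
        unfolding comp by linarith
    qed
  qed
qed

lemma rel_interior_XX:
  fixes y :: "real ^ 'e::finite"
  assumes x: "x \<in> rel_interior (XX N v y)"
  shows "ftype N v x = ftype N v y"
proof -
  from x obtain e where e: "e > 0" "ball x e \<inter> affine hull (XX N v y) \<subseteq> XX N v y"
    and xX: "x \<in> XX N v y"
    unfolding mem_rel_interior_ball by blast
  define \<epsilon> where "\<epsilon> = e / (2 * (norm (x - y) + 1))"
  have "2 * (norm (x - y) + 1) > 0" by (simp add: add_nonneg_pos)
  then have \<epsilon>0: "\<epsilon> > 0" using e unfolding \<epsilon>_def by (intro divide_pos_pos)
  define q where "q = (1 + \<epsilon>) *\<^sub>R x + (- \<epsilon>) *\<^sub>R y"
  have "q \<in> affine hull (XX N v y)"
    unfolding q_def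
    by (rule mem_affine[OF affine_affine_hull]) (auto intro: hull_inc xX XX_self)
  moreover have "dist x q < e"
  proof -
    have "q - x = \<epsilon> *\<^sub>R (x - y)" by (simp add: q_def algebra_simps)
    then have "dist x q = \<epsilon> * norm (x - y)" using \<epsilon>0 by (simp add: dist_norm norm_minus_commute)
    also have "\<dots> \<le> \<epsilon> * (norm (x - y) + 1)" using \<epsilon>0 by (intro mult_left_mono) auto
    also have "\<dots> = e / 2"
    proof -
      have "norm (x - y) + 1 \<noteq> 0" by (metis add_nonneg_pos norm_ge_zero zero_less_one less_irrefl)
      then show ?thesis by (simp add: \<epsilon>_def field_simps)
    qed
    finally show ?thesis using e by linarith
  qed
  ultimately have qX: "q \<in> XX N v y" using e by auto
  show ?thesis
  proof (intro ext set_eqI iffI)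
    fix m l assume l: "l \<in> ftype N v y m"
    then show "l \<in> ftype N v x m" using xX unfolding XX_def by auto
  next
    fix m l assume l: "l \<in> ftype N v x m"
    then have lN: "l \<in> N" unfolding ftype_def by auto
    show "l \<in> ftype N v y m"
    proof (rule ccontr)
      assume nl: "l \<notin> ftype N v y m"
      obtain i where i: "l \<in> ftype N v y i" using ex_sector[OF lN] by blast
      then have iq: "l \<in> ftype N v q i" using qX unfolding XX_def by auto
      have "\<exists>j. (v l - y) $ m > (v l - y) $ j" using nl lN unfolding ftype_def in_sector_def by (auto simp: not_le)
        then obtain j where j: "(v l - y) $ m > (v l - y) $ j" by blast
      have "(v l - y) $ i \<le> (v l - y) $ j" using i unfolding ftype_def in_sector_def by auto
      with j have s: "(v l - y) $ i < (v l - y) $ m" by linarith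
      have a: "(v l - x) $ m \<le> (v l - x) $ i" using l unfolding ftype_def in_sector_def by auto
      have c: "(v l - q) $ i \<le> (v l - q) $ m" using iq unfolding ftype_def in_sector_def by auto
      have comp: "(v l - q) $ p = (1 + \<epsilon>) * (v l - x) $ p - \<epsilon> * (v l - y) $ p" for p
        by (simp add: q_def algebra_simps)
      have "(1 + \<epsilon>) * (v l - x) $ m \<le> (1 + \<epsilon>) * (v l - x) $ i" using a \<epsilon>0 by (intro mult_left_mono) auto
      moreover have "\<epsilon> * (v l - y) $ i < \<epsilon> * (v l - y) $ m" using s \<epsilon>0 by auto
      ultimately show False using c unfolding comp by linarith
    qed
  qed
qed

lemma XX_eq_iff: "XX N v y = XX N v z \<longleftrightarrow> ftype N v y = ftype N v z"
proof
  assume h: "XX N v y = XX N v z"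
  have "y \<in> XX N v z" "z \<in> XX N v y" using XX_self[of y N v] XX_self[of z N v] h by auto
  then show "ftype N v y = ftype N v z" unfolding XX_def by (auto intro!: ext)
qed (simp add: XX_def)

definition minimal_pt :: "'b set \<Rightarrow> ('b \<Rightarrow> real ^ 'e) \<Rightarrow> real ^ 'e \<Rightarrow> bool" where
  "minimal_pt N v y \<longleftrightarrow> (\<forall>z. (\<forall>m. ftype N v z m \<subseteq> ftype N v y m) \<longrightarrow> ftype N v z = ftype N v y)"

lemma max_cell_ctypes_char:
  fixes v :: "'b \<Rightarrow> real ^ 'e::finite"
  shows "max_cell_ctypes N v = {ctype N v y | y. minimal_pt N v y}"
proof -
  have tc: "trop_cell N v C \<longleftrightarrow> (\<exists>x. C = XX N v x)" for C
    unfolding trop_cell_def closure_cell by simp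
  have sub: "XX N v y \<subseteq> XX N v z \<longleftrightarrow> (\<forall>m. ftype N v z m \<subseteq> ftype N v y m)" for y z
    unfolding XX_def using XX_self[of y N v] unfolding XX_def by blast
  show ?thesis
  proof (intro set_eqI iffI)
    fix t assume "t \<in> max_cell_ctypes N v"
    then obtain x C where t: "t = ctype N v x" and C: "max_trop_cell N v C" and x: "x \<in> rel_interior C"
      unfolding max_cell_ctypes_def by blast
    from C obtain y where Cy: "C = XX N v y" unfolding max_trop_cell_def tc by blast
    have "ftype N v x = ftype N v y" using rel_interior_XX x Cy by blast
    then have "t = ctype N v y" unfolding t ctype_def by simp
    moreover have "minimal_pt N v y"
      unfolding minimal_pt_def
    proof (intro allI impI)
      fix z assume "\<forall>m. ftype N v z m \<subseteq> ftype N v y m"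
      then have "XX N v y \<subseteq> XX N v z" using sub by blast
      moreover have "\<not> (C \<subset> XX N v z)" using C unfolding max_trop_cell_def tc by blast
      ultimately have "XX N v y = XX N v z" using Cy by blast
      then show "ftype N v z = ftype N v y" using XX_eq_iff by metis
    qed
    ultimately show "t \<in> {ctype N v y | y. minimal_pt N v y}" by blast
  next
    fix t assume "t \<in> {ctype N v y | y. minimal_pt N v y}"
    then obtain y where t: "t = ctype N v y" and my: "minimal_pt N v y" by blast
    have "rel_interior (XX N v y) \<noteq> {}"
      using rel_interior_eq_empty[OF convex_XX] XX_self by blast
    then obtain x where x: "x \<in> rel_interior (XX N v y)" by blast
    have "ftype N v x = ftype N v y" using rel_interior_XX x by blast
    then have tx: "t = ctype N v x" unfolding t ctype_def by simp
    have "max_trop_cell N v (XX N v y)"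
      unfolding max_trop_cell_def tc
    proof (intro conjI notI)
      show "\<exists>x. XX N v y = XX N v x" by blast
      assume "\<exists>C'. (\<exists>x. C' = XX N v x) \<and> XX N v y \<subset> C'"
      then obtain z where "XX N v y \<subset> XX N v z" by blast
      moreover then have "ftype N v z = ftype N v y" using my sub unfolding minimal_pt_def by blast
      ultimately show False using XX_eq_iff by (metis order_less_irrefl)
    qed
    with x tx show "t \<in> max_cell_ctypes N v" unfolding max_cell_ctypes_def by blast
  qed
qed




lemma sort_dec:
  fixes f :: "'a \<Rightarrow> real"
  assumes "finite A" "inj_on f A"
  shows "\<exists>i. bij_betw i {1..card A} A \<and>
           (\<forall>l\<in>{1..card A}. \<forall>l'\<in>{1..card A}. l < l' \<longrightarrow> f (i l') < f (i l))"
  using assms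
proof (induction "card A" arbitrary: A)
  case 0
  then have "A = {}" by simp
  then show ?case by (auto simp: bij_betw_def)
next
  case (Suc n)
  then have ne: "A \<noteq> {}" by auto
  have "Min (f ` A) \<in> f ` A" using Suc.prems ne by (intro Min_in) auto
  then obtain m where m: "m \<in> A" "f m = Min (f ` A)" by (metis imageE)
  have mmin: "f m \<le> f x" if "x \<in> A" for x unfolding m(2) using Suc.prems that by (intro Min_le) auto
  define A' where "A' = A - {m}"
  have cA': "n = card A'" using Suc.hyps(2) m(1) Suc.prems by (simp add: A'_def)
  obtain i' where i': "bij_betw i' {1..card A'} A'"
    "\<forall>l\<in>{1..card A'}. \<forall>l'\<in>{1..card A'}. l < l' \<longrightarrow> f (i' l') < f (i' l)"
  proof -
    have "finite A'" "inj_on f A'" using Suc.prems by (auto simp: A'_def inj_on_diff)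
    then show ?thesis using Suc.hyps(1)[OF cA'] that by blast
  qed
  define i where "i = i'(Suc n := m)"
  have bi: "bij_betw i {1..n} A'"
  proof -
    have "\<forall>x\<in>{1..n}. i x = i' x" by (auto simp: i_def)
    then show ?thesis using i'(1) cA' bij_betw_cong by metis
  qed
  have "bij_betw i ({1..n} \<union> {Suc n}) (A' \<union> {i (Suc n)})"
    by (rule notIn_Un_bij_betw[OF _ _ bi]) (auto simp: i_def A'_def)
  moreover have "{1..n} \<union> {Suc n} = {1..card A}" using Suc.hyps(2) by auto
  moreover have "A' \<union> {i (Suc n)} = A" using m by (auto simp: i_def A'_def)
  ultimately have bij: "bij_betw i {1..card A} A" by simp
  show ?case
  proof (intro exI conjI ballI impI, rule bij)
    fix l l' assume l: "l \<in> {1..card A}" and l': "l' \<in> {1..card A}" and ll: "l < l'"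
    show "f (i l') < f (i l)"
    proof (cases "l' = Suc n")
      case True
      then have "l \<in> {1..n}" using l ll by auto
      then have il: "i l \<in> A'" "i l = i' l" using bi by (auto simp: bij_betw_def i_def)
      then have "i l \<in> A" "i l \<noteq> m" by (auto simp: A'_def)
      then have "f (i l) \<noteq> f m" using Suc.prems(2) m(1) by (metis inj_on_def)
      moreover have "f m \<le> f (i l)" using mmin \<open>i l \<in> A\<close> by blast
      ultimately show ?thesis using True by (simp add: i_def)
    next
      case False
      then have "l' \<in> {1..n}" "l \<in> {1..n}" using l l' ll Suc.hyps(2) by auto
      then show ?thesis using i'(2) ll cA' by (auto simp: i_def)
    qed
  qed
qed




abbreviation "ind j B \<equiv> (if j \<in> B then 1 else 0 :: real)"

lemma ftype_char_aux:
  "(- e_set B - z) $ m \<le> (- e_set B - z) $ j \<longleftrightarrow> z$j + ind j B \<le> z$m + ind m B"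
  unfolding e_set_def by (cases "m \<in> B"; cases "j \<in> B"; simp add: le_diff_eq diff_le_eq; linarith?)

lemma ftype_char:
  "B \<in> ftype N (\<lambda>B. - e_set B) z m \<longleftrightarrow> B \<in> N \<and> (\<forall>j. z$j + ind j B \<le> z$m + ind m B)"
  unfolding ftype_def in_sector_def ftype_char_aux by simp

definition gen :: "real ^ 'e \<Rightarrow> bool" where
  "gen z \<longleftrightarrow> (\<forall>i j. i \<noteq> j \<longrightarrow> z$i \<noteq> z$j \<and> z$i \<noteq> z$j + 1)"

lemma genD: assumes "gen z" "i \<noteq> j" shows "z$i \<noteq> z$j" "z$i \<noteq> z$j + 1"
  using assms unfolding gen_def by auto

lemma gen_unique:
  assumes "gen z" "B \<in> ftype N (\<lambda>B. - e_set B) z m" "B \<in> ftype N (\<lambda>B. - e_set B) z m'"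
  shows "m = m'"
proof (rule ccontr)
  assume ne: "m \<noteq> m'"
  have h1: "z$m' + ind m' B \<le> z$m + ind m B" using assms(2) unfolding ftype_char by blast
  have h2: "z$m + ind m B \<le> z$m' + ind m' B" using assms(3) unfolding ftype_char by blast
  have g1: "z$m \<noteq> z$m'" "z$m \<noteq> z$m' + 1" using genD[OF assms(1) ne] by auto
  have g2: "z$m' \<noteq> z$m + 1" using genD[OF assms(1)] ne by metis
  show False
  proof (cases "m \<in> B")
    case True
    show False
    proof (cases "m' \<in> B")
      case True
      with \<open>m \<in> B\<close> h1 h2 g1 show False by simp
    next
      case False
      with \<open>m \<in> B\<close> h1 h2 g2 show False by simp
    qed
  next
    case False
    show False
    proof (cases "m' \<in> B")
      case True
      with \<open>m \<notin> B\<close> h1 h2 g1 show False by simp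
    next
      case False
      with \<open>m \<notin> B\<close> h1 h2 g1 show False by simp
    qed
  qed
qed

lemma gen_minimal:
  fixes z :: "real ^ 'e::finite"
  assumes "gen z"
  shows "minimal_pt N (\<lambda>B. - e_set B) z"
  unfolding minimal_pt_def
proof (intro allI impI)
  fix w
  assume sub: "\<forall>m. ftype N (\<lambda>B. - e_set B) w m \<subseteq> ftype N (\<lambda>B. - e_set B) z m"
  have sup: "ftype N (\<lambda>B. - e_set B) z m \<subseteq> ftype N (\<lambda>B. - e_set B) w m" for m
  proof
    fix B assume B: "B \<in> ftype N (\<lambda>B. - e_set B) z m"
    then have BN: "B \<in> N" unfolding ftype_def by simp
    obtain m' where m': "B \<in> ftype N (\<lambda>B. - e_set B) w m'"
      using ex_sector[OF BN, of "\<lambda>B. - e_set B" w] by (elim exE)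
    then have "B \<in> ftype N (\<lambda>B. - e_set B) z m'" using sub by (simp add: subset_iff)
    then have "m = m'" by (rule gen_unique[OF assms B])
    with m' show "B \<in> ftype N (\<lambda>B. - e_set B) w m" by simp
  qed
  show "ftype N (\<lambda>B. - e_set B) w = ftype N (\<lambda>B. - e_set B) z"
  proof (rule ext, rule equalityI)
    fix m
    show "ftype N (\<lambda>B. - e_set B) w m \<subseteq> ftype N (\<lambda>B. - e_set B) z m" using sub by (rule spec)
    show "ftype N (\<lambda>B. - e_set B) z m \<subseteq> ftype N (\<lambda>B. - e_set B) w m" by (rule sup)
  qed
qed

definition bc :: "'e set set \<Rightarrow> 'e set \<Rightarrow> 'e set \<Rightarrow> nat" where
  "bc N I J = card {B \<in> N. I \<subseteq> B \<and> J \<inter> B = {}}"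


lemma gen_ctype:
  fixes z :: "real ^ 'e::finite" and N :: "'e set set" and r :: nat
  assumes g: "gen z" and amax: "\<forall>j. z$j \<le> z$a" and A: "A = {j. z$a - 1 < z$j}"
    and bij: "bij_betw i {1..r} A"
    and dec: "\<forall>l\<in>{1..r}. \<forall>l'\<in>{1..r}. l < l' \<longrightarrow> z$(i l') < z$(i l)"
  shows "i 1 = a"
    and "ctype N (\<lambda>B. - e_set B) z a = bc N {a} {} + bc N {} A"
    and "\<And>l. l \<in> {2..r} \<Longrightarrow> ctype N (\<lambda>B. - e_set B) z (i l) = bc N {i l} (i ` {1..<l})"
    and "\<And>j. j \<notin> A \<Longrightarrow> ctype N (\<lambda>B. - e_set B) z j = 0"
proof -
  let ?v = "\<lambda>B. - e_set B :: real ^ 'e"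
  have aA: "a \<in> A" using A by auto
  then obtain la where la: "la \<in> {1..r}" "i la = a" using bij by (metis bij_betw_def imageE)
  have r1: "1 \<in> {1..r}" using la by auto
  have "i 1 \<in> A" using bij r1 by (metis bij_betw_def image_eqI)
  show ia: "i 1 = a"
  proof (rule ccontr)
    assume "i 1 \<noteq> a"
    then have "la \<noteq> 1" using la by auto
    then have "1 < la" using la by auto
    then have "z$a < z$(i 1)" using dec la r1 by auto
    with amax show False by (metis not_le)
  qed
  have zinj: "z$j = z$j' \<Longrightarrow> j = j'" for j j' using genD(1)[OF g] by metis
  show "ctype N ?v z a = bc N {a} {} + bc N {} A"
  proof -
    have "ftype N ?v z a = {B \<in> N. {a} \<subseteq> B \<and> {} \<inter> B = {}} \<union> {B \<in> N. {} \<subseteq> B \<and> A \<inter> B = {}}"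
    proof (intro set_eqI iffI)
      fix B assume B: "B \<in> ftype N ?v z a"
      then have BN: "B \<in> N" and le: "\<forall>j. z$j + ind j B \<le> z$a + ind a B" unfolding ftype_char by auto
      show "B \<in> {B \<in> N. {a} \<subseteq> B \<and> {} \<inter> B = {}} \<union> {B \<in> N. {} \<subseteq> B \<and> A \<inter> B = {}}"
      proof (cases "a \<in> B")
        case True then show ?thesis using BN by auto
      next
        case False
        have "A \<inter> B = {}"
        proof (rule ccontr)
          assume "A \<inter> B \<noteq> {}"
          then obtain j where "j \<in> A" "j \<in> B" by auto
          then show False using le[rule_format, of j] False A by auto
        qed
        then show ?thesis using BN by auto
      qed
    next
      fix B assume B: "B \<in> {B \<in> N. {a} \<subseteq> B \<and> {} \<inter> B = {}} \<union> {B \<in> N. {} \<subseteq> B \<and> A \<inter> B = {}}"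
      show "B \<in> ftype N ?v z a"
        unfolding ftype_char
      proof (intro conjI allI)
        show "B \<in> N" using B by auto
        fix j
        show "z$j + ind j B \<le> z$a + ind a B"
        proof (cases "a \<in> B")
          case True then show ?thesis using amax[rule_format, of j] by auto
        next
          case False
          then have "A \<inter> B = {}" using B by auto
          then have "j \<in> B \<Longrightarrow> z$j \<le> z$a - 1" using A by auto
          then show ?thesis using amax[rule_format, of j] False by auto
        qed
      qed
    qed
    moreover have "{B \<in> N. {a} \<subseteq> B \<and> {} \<inter> B = {}} \<inter> {B \<in> N. {} \<subseteq> B \<and> A \<inter> B = {}} = {}"
      using aA by auto
    ultimately show ?thesis unfolding ctype_def bc_def
      by (simp add: card_Un_disjoint)
  qed
  show "ctype N ?v z (i l) = bc N {i l} (i ` {1..<l})" if l: "l \<in> {2..r}" for l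
  proof -
    let ?m = "i l"
    have l1: "l \<in> {1..r}" using l by auto
    have mA: "?m \<in> A" using bij l1 by (metis bij_betw_def image_eqI)
    have "?m \<noteq> a"
    proof
      assume "?m = a"
      then have "i l = i 1" using ia by simp
      then have "l = 1" using bij l1 r1 by (metis bij_betw_def inj_on_def)
      then show False using l by auto
    qed
    then have mlt: "z$?m < z$a" using amax zinj by (metis order_le_less)
    have above: "{j. z$?m < z$j} = i ` {1..<l}"
    proof (intro set_eqI iffI)
      fix j assume j: "j \<in> {j. z$?m < z$j}"
      then have "j \<in> A" using mA A by auto
      then obtain l' where l': "l' \<in> {1..r}" "i l' = j" using bij by (metis bij_betw_def imageE)
      have "l' < l"
      proof (rule ccontr)
        assume "\<not> l' < l"
        then have "l' = l \<or> l < l'" by auto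
        then show False using dec[rule_format, OF l1 l'(1)] l' j by auto
      qed
      then show "j \<in> i ` {1..<l}" using l' by auto
    next
      fix j assume "j \<in> i ` {1..<l}"
      then obtain l' where "l' \<in> {1..<l}" "j = i l'" by auto
      then show "j \<in> {j. z$?m < z$j}" using dec l1 by auto
    qed
    have "ftype N ?v z ?m = {B \<in> N. {?m} \<subseteq> B \<and> i ` {1..<l} \<inter> B = {}}"
    proof (intro set_eqI iffI)
      fix B assume B: "B \<in> ftype N ?v z ?m"
      then have BN: "B \<in> N" and le: "\<forall>j. z$j + ind j B \<le> z$?m + ind ?m B" unfolding ftype_char by auto
      have mB: "?m \<in> B"
      proof (rule ccontr)
        assume "?m \<notin> B"
        then show False using le[rule_format, of a] mlt by (auto split: if_splits)
      qed
      have "i ` {1..<l} \<inter> B = {}"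
      proof (rule ccontr)
        assume "i ` {1..<l} \<inter> B \<noteq> {}"
        then obtain j where j1: "j \<in> i ` {1..<l}" and j2: "j \<in> B" by auto
        have "z$?m < z$j" using j1 unfolding above[symmetric] by simp
        then show False using le[rule_format, of j] mB j2 by simp
      qed
      then show "B \<in> {B \<in> N. {?m} \<subseteq> B \<and> i ` {1..<l} \<inter> B = {}}" using BN mB by auto
    next
      fix B assume B: "B \<in> {B \<in> N. {?m} \<subseteq> B \<and> i ` {1..<l} \<inter> B = {}}"
      then have mB: "?m \<in> B" by auto
      have dis: "z$j \<le> z$?m" if jB: "j \<in> B" for j
      proof (rule ccontr)
        assume "\<not> z$j \<le> z$?m"
        then have "j \<in> {j. z$?m < z$j}" by simp
        then have "j \<in> i ` {1..<l}" unfolding above .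
        then show False using B jB by auto
      qed
      show "B \<in> ftype N ?v z ?m"
        unfolding ftype_char
      proof (intro conjI allI)
        show "B \<in> N" using B by auto
        fix j
        have "z$a - 1 < z$?m" using mA A by auto
        then show "z$j + ind j B \<le> z$?m + ind ?m B" using mB dis[of j] amax[rule_format, of j] by auto
      qed
    qed
    then show ?thesis unfolding ctype_def bc_def by simp
  qed
  show "ctype N ?v z j = 0" if j: "j \<notin> A" for j
  proof -
    have "ftype N ?v z j = {}"
    proof (rule ccontr)
      assume "ftype N ?v z j \<noteq> {}"
      then obtain B where "B \<in> ftype N ?v z j" by auto
      then have le: "z$a + ind a B \<le> z$j + ind j B" unfolding ftype_char by auto
      have "z$j \<le> z$a - 1" using j A by auto
      moreover have "j \<noteq> a" using j aA by auto
      moreover have "z$a \<noteq> z$j + 1" using genD(2)[OF g] \<open>j \<noteq> a\<close> by metis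
      ultimately show False using le by (cases "a \<in> B"; cases "j \<in> B"; simp; linarith?)
    qed
    then show ?thesis unfolding ctype_def by simp
  qed
qed




lemma ev_ne: "\<forall>\<^sub>F \<epsilon> in at_right (0::real). \<epsilon> \<noteq> b"
proof (cases "b = 0")
  case True
  then show ?thesis using eventually_at_right_less[of "0::real"] by (auto elim: eventually_mono)
next
  case False
  have "((\<lambda>x. x) \<longlongrightarrow> (0::real)) (at_right 0)" by (rule tendsto_ident_at)
  from tendsto_imp_eventually_ne[OF this] False show ?thesis by auto
qed

lemma perturb:
  fixes y :: "real ^ 'e::finite" and N :: "'e set set"
  shows "\<exists>z. gen z \<and> (\<forall>m. ftype N (\<lambda>B. - e_set B) z m \<subseteq> ftype N (\<lambda>B. - e_set B) y m)"
proof -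
  obtain g where g: "bij_betw g (UNIV :: 'e set) {0..<card (UNIV :: 'e set)}"
    using ex_bij_betw_finite_nat[of "UNIV :: 'e set"] by auto
  then have ginj: "inj g" by (simp add: bij_betw_def)
  define w :: "real ^ 'e" where "w = (\<chi> j. real (g j))"
  define zf where "zf = (\<lambda>\<epsilon>::real. y + \<epsilon> *\<^sub>R w)"
  have zc: "zf \<epsilon> $ j = y $ j + \<epsilon> * w $ j" for \<epsilon> j by (simp add: zf_def)
  have E1: "\<forall>\<^sub>F \<epsilon> in at_right 0. \<forall>B m j. y$m + ind m B < y$j + ind j B \<longrightarrow>
              zf \<epsilon> $ m + ind m B < zf \<epsilon> $ j + ind j B"
  proof (intro eventually_all_finite)
    fix B :: "'e set" and m j :: 'e
    show "\<forall>\<^sub>F \<epsilon> in at_right 0. y$m + ind m B < y$j + ind j B \<longrightarrow>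
              zf \<epsilon> $ m + ind m B < zf \<epsilon> $ j + ind j B"
    proof (cases "y$m + ind m B < y$j + ind j B")
      case False then show ?thesis by simp
    next
      case True
      let ?f = "\<lambda>\<epsilon>::real. (y$j + ind j B + \<epsilon> * w$j) - (y$m + ind m B + \<epsilon> * w$m)"
      have "(?f \<longlongrightarrow> ?f 0) (at_right 0)" by (intro tendsto_intros)
      moreover have "?f 0 > 0" using True by simp
      ultimately have "\<forall>\<^sub>F \<epsilon> in at_right 0. ?f \<epsilon> > 0" by (rule order_tendstoD(1))
      then show ?thesis by (rule eventually_mono) (simp add: zc)
    qed
  qed
  have E2: "\<forall>\<^sub>F \<epsilon> in at_right 0. \<forall>i j. i \<noteq> j \<longrightarrow> zf \<epsilon> $ i \<noteq> zf \<epsilon> $ j \<and> zf \<epsilon> $ i \<noteq> zf \<epsilon> $ j + 1"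
  proof (intro eventually_all_finite)
    fix i j :: 'e
    show "\<forall>\<^sub>F \<epsilon> in at_right 0. i \<noteq> j \<longrightarrow> zf \<epsilon> $ i \<noteq> zf \<epsilon> $ j \<and> zf \<epsilon> $ i \<noteq> zf \<epsilon> $ j + 1"
    proof (cases "i = j")
      case True then show ?thesis by simp
    next
      case False
      define d where "d = w$i - w$j"
      have d: "d \<noteq> 0" using ginj False by (auto simp: d_def w_def inj_def)
      have "\<forall>\<^sub>F \<epsilon> in at_right 0. \<epsilon> \<noteq> - (y$i - y$j) / d \<and> \<epsilon> \<noteq> (1 - (y$i - y$j)) / d"
        by (intro eventually_conj ev_ne)
      then show ?thesis
      proof (rule eventually_mono, intro impI conjI)
        fix \<epsilon> assume h: "\<epsilon> \<noteq> - (y$i - y$j) / d \<and> \<epsilon> \<noteq> (1 - (y$i - y$j)) / d"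
        show "zf \<epsilon> $ i \<noteq> zf \<epsilon> $ j"
        proof
          assume "zf \<epsilon> $ i = zf \<epsilon> $ j"
          then have "\<epsilon> * d = - (y$i - y$j)" by (simp add: zc d_def algebra_simps)
          then have "\<epsilon> = - (y$i - y$j) / d" using d by (simp add: field_simps)
          with h show False by simp
        qed
        show "zf \<epsilon> $ i \<noteq> zf \<epsilon> $ j + 1"
        proof
          assume "zf \<epsilon> $ i = zf \<epsilon> $ j + 1"
          then have "\<epsilon> * d = 1 - (y$i - y$j)" by (simp add: zc d_def algebra_simps)
          then have "\<epsilon> = (1 - (y$i - y$j)) / d" using d by (simp add: field_simps)
          with h show False by simp
        qed
      qed
    qed
  qed
  from eventually_happens[OF eventually_conj[OF E1 E2]] obtain \<epsilon> where
    e1: "\<forall>B m j. y$m + ind m B < y$j + ind j B \<longrightarrow> zf \<epsilon> $ m + ind m B < zf \<epsilon> $ j + ind j B"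
    and e2: "\<forall>i j. i \<noteq> j \<longrightarrow> zf \<epsilon> $ i \<noteq> zf \<epsilon> $ j \<and> zf \<epsilon> $ i \<noteq> zf \<epsilon> $ j + 1"
    by auto
  have "gen (zf \<epsilon>)" unfolding gen_def using e2 by simp
  moreover have "ftype N (\<lambda>B. - e_set B) (zf \<epsilon>) m \<subseteq> ftype N (\<lambda>B. - e_set B) y m" for m
  proof
    fix B assume B: "B \<in> ftype N (\<lambda>B. - e_set B) (zf \<epsilon>) m"
    then have BN: "B \<in> N" and le: "\<forall>j. zf \<epsilon> $ j + ind j B \<le> zf \<epsilon> $ m + ind m B"
      unfolding ftype_char by auto
    show "B \<in> ftype N (\<lambda>B. - e_set B) y m"
      unfolding ftype_char
    proof (intro conjI allI BN)
      fix j
      show "y$j + ind j B \<le> y$m + ind m B"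
      proof (rule ccontr)
        assume "\<not> y$j + ind j B \<le> y$m + ind m B"
        then have "y$m + ind m B < y$j + ind j B" by simp
        then have "zf \<epsilon> $ m + ind m B < zf \<epsilon> $ j + ind j B" using e1 by blast
        with le show False by (meson not_le)
      qed
    qed
  qed
  ultimately show ?thesis by blast
qed




lemma basis_ex:
  fixes ends :: "'e::finite \<Rightarrow> 'v set"
  shows "\<exists>B. graphic_basis ends B"
proof -
  let ?S = "{B. acyclic_edges ends B}"
  have e: "{} \<in> ?S" by (simp add: acyclic_edges_def)
  have fin: "finite ?S" by simp
  have "Max (card ` ?S) \<in> card ` ?S" using e fin by (intro Min_in Max_in) auto
  then obtain B where B: "B \<in> ?S" "card B = Max (card ` ?S)" by (metis imageE)
  have "graphic_basis ends B"
    unfolding graphic_basis_def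
  proof (intro conjI allI impI)
    show "acyclic_edges ends B" using B by simp
    fix B' assume h: "acyclic_edges ends B' \<and> B \<subseteq> B'"
    then have "card B' \<le> card B" unfolding B(2) using fin by (intro Max_ge) auto
    then show "B' = B" using h by (metis card_subset_eq finite antisym card_mono)
  qed
  then show ?thesis by blast
qed

lemma bcount_bc: "bcount ends I J = bc {B. graphic_basis ends B} I J"
  unfolding bcount_def bc_def by simp




lemma dir1:
  fixes ends :: "'e::finite \<Rightarrow> 'v set" and k :: nat
  assumes kk: "\<forall>B. graphic_basis ends B \<longrightarrow> card B = k"
    and my: "minimal_pt {B. graphic_basis ends B} (\<lambda>B. - e_set B) y"
  shows "ctype {B. graphic_basis ends B} (\<lambda>B. - e_set B) y \<in>
    {t. \<exists>(d'::nat) (i::nat \<Rightarrow> 'e).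
          d' \<le> CARD('e) - k \<and>
          inj_on i {1..d'+1} \<and>
          (\<exists>B. graphic_basis ends B \<and> B \<subseteq> UNIV - i ` {1..d'}) \<and>
          t (i 1) = bcount ends {i 1} {} + bcount ends {} (i ` {1..d'+1}) \<and>
          (\<forall>l\<in>{2..d'+1}. t (i l) = bcount ends {i l} (i ` {1..<l})) \<and>
          (\<forall>j. j \<notin> i ` {1..d'+1} \<longrightarrow> t j = 0)}"
proof -
  let ?N = "{B. graphic_basis ends B}"
  let ?v = "\<lambda>B. - e_set B :: real ^ 'e"
  obtain z where gz: "gen z" and sub: "\<forall>m. ftype ?N ?v z m \<subseteq> ftype ?N ?v y m"
    using perturb by blast
  have "ftype ?N ?v z = ftype ?N ?v y" using my sub unfolding minimal_pt_def by blast
  then have ty: "ctype ?N ?v y = ctype ?N ?v z" unfolding ctype_def by simp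
  obtain a where "\<forall>j. - z$a \<le> - z$j" using ex_argmin[of "\<lambda>j. - z$j"] by blast
  then have amax: "\<forall>j. z$j \<le> z$a" by simp
  define A where "A = {j. z$a - 1 < z$j}"
  have aA: "a \<in> A" by (simp add: A_def)
  have "inj_on (\<lambda>j. z$j) A" using genD(1)[OF gz] by (metis inj_onI)
  then obtain i where bij: "bij_betw i {1..card A} A"
    and dec: "\<forall>l\<in>{1..card A}. \<forall>l'\<in>{1..card A}. l < l' \<longrightarrow> z$(i l') < z$(i l)"
    using sort_dec[of A "\<lambda>j. z$j"] by auto
  define r where "r = card A"
  have bij': "bij_betw i {1..r} A" and dec': "\<forall>l\<in>{1..r}. \<forall>l'\<in>{1..r}. l < l' \<longrightarrow> z$(i l') < z$(i l)"
    using bij dec by (auto simp: r_def)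
  note G = gen_ctype[OF gz amax A_def bij' dec']
  have r1: "1 \<le> r" unfolding r_def using aA by (metis card_0_eq finite ex_in_conv less_one not_le)
  define P where "P l = (\<exists>B. graphic_basis ends B \<and> B \<subseteq> UNIV - i ` {1..l})" for l
  define D where "D = {l. l \<le> r - 1 \<and> P l}"
  have P0: "P 0" unfolding P_def using basis_ex[of ends] by auto
  have finD: "finite D" unfolding D_def by auto
  have D0: "0 \<in> D" using P0 by (simp add: D_def)
  define d' where "d' = Max D"
  have dD: "d' \<in> D" unfolding d'_def using finD D0 by (intro Max_in) auto
  then have Pd: "P d'" and dr: "d' \<le> r - 1" by (auto simp: D_def)
  have notP: "\<not> P (d'+1)" if "d' < r - 1"
  proof
    assume "P (d'+1)"
    then have "d'+1 \<in> D" using that by (simp add: D_def)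
    then have "d'+1 \<le> d'" unfolding d'_def using finD by (intro Max_ge) auto
    then show False by simp
  qed
  have empty: "bc ?N X I = 0" if "d' < r - 1" "i ` {1..d'+1} \<subseteq> I" for X I
  proof -
    have "{B \<in> ?N. X \<subseteq> B \<and> I \<inter> B = {}} = {}"
    proof (rule ccontr)
      assume "{B \<in> ?N. X \<subseteq> B \<and> I \<inter> B = {}} \<noteq> {}"
      then obtain B where "graphic_basis ends B" "I \<inter> B = {}" by auto
      then have "P (d'+1)" unfolding P_def using that(2) by blast
      then show False using notP that(1) by blast
    qed
    then show ?thesis unfolding bc_def by simp
  qed
  have injr: "inj_on i {1..r}" using bij' by (simp add: bij_betw_def)
  let ?t = "ctype ?N ?v z"
  have "?t \<in> {t. \<exists>(d'::nat) (i::nat \<Rightarrow> 'e).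
          d' \<le> CARD('e) - k \<and>
          inj_on i {1..d'+1} \<and>
          (\<exists>B. graphic_basis ends B \<and> B \<subseteq> UNIV - i ` {1..d'}) \<and>
          t (i 1) = bcount ends {i 1} {} + bcount ends {} (i ` {1..d'+1}) \<and>
          (\<forall>l\<in>{2..d'+1}. t (i l) = bcount ends {i l} (i ` {1..<l})) \<and>
          (\<forall>j. j \<notin> i ` {1..d'+1} \<longrightarrow> t j = 0)}"
  proof (rule CollectI, rule exI[of _ d'], rule exI[of _ i], intro conjI)
    show "d' \<le> CARD('e) - k"
    proof -
      obtain B where B: "graphic_basis ends B" "B \<subseteq> UNIV - i ` {1..d'}" using Pd unfolding P_def by blast
      have cB: "card B = k" using kk B(1) by blast
      have ci: "card (i ` {1..d'}) = d'"
      proof -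
        have "{1..d'} \<subseteq> {1..r}" using dr r1 by auto
        then have "inj_on i {1..d'}" using injr inj_on_subset by blast
        then show ?thesis by (simp add: card_image)
      qed
      have "card (B \<union> i ` {1..d'}) = card B + card (i ` {1..d'})"
        using B(2) by (intro card_Un_disjoint) auto
      moreover have "card (B \<union> i ` {1..d'}) \<le> CARD('e)" by (rule card_mono) auto
      ultimately show ?thesis using cB ci by simp
    qed
    show "inj_on i {1..d'+1}"
    proof -
      have "{1..d'+1} \<subseteq> {1..r}" using dr r1 by auto
      then show ?thesis using injr inj_on_subset by blast
    qed
    show "\<exists>B. graphic_basis ends B \<and> B \<subseteq> UNIV - i ` {1..d'}" using Pd unfolding P_def by blast
    show "?t (i 1) = bcount ends {i 1} {} + bcount ends {} (i ` {1..d'+1})"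
    proof (cases "d' = r - 1")
      case True
      then have "i ` {1..d'+1} = A" using bij' r1 by (simp add: bij_betw_def)
      then show ?thesis using G(1,2) by (simp add: bcount_bc)
    next
      case False
      then have lt: "d' < r - 1" using dr by simp
      have "i ` {1..d'+1} \<subseteq> A" using bij' dr r1 by (auto simp: bij_betw_def)
      then have "bc ?N {} A = 0" using empty[OF lt] by blast
      moreover have "bc ?N {} (i ` {1..d'+1}) = 0" using empty[OF lt] by blast
      ultimately show ?thesis using G(1,2) by (simp add: bcount_bc)
    qed
    show "\<forall>l\<in>{2..d'+1}. ?t (i l) = bcount ends {i l} (i ` {1..<l})"
    proof
      fix l assume "l \<in> {2..d'+1}"
      then have "l \<in> {2..r}" using dr r1 by auto
      then show "?t (i l) = bcount ends {i l} (i ` {1..<l})" using G(3) by (simp add: bcount_bc)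
    qed
    show "\<forall>j. j \<notin> i ` {1..d'+1} \<longrightarrow> ?t j = 0"
    proof (intro allI impI)
      fix j assume j: "j \<notin> i ` {1..d'+1}"
      show "?t j = 0"
      proof (cases "j \<in> A")
        case False then show ?thesis using G(4) by blast
      next
        case True
        then obtain l where l: "l \<in> {1..r}" "i l = j" using bij' by (metis bij_betw_def imageE)
        then have "l \<notin> {1..d'+1}" using j by auto
        then have ll: "d'+1 < l" using l by auto
        then have l2: "l \<in> {2..r}" using l by auto
        have lt: "d' < r - 1" using ll l by auto
        have "i ` {1..d'+1} \<subseteq> i ` {1..<l}" using ll by (intro image_mono) auto
        then have "bc ?N {i l} (i ` {1..<l}) = 0" using empty[OF lt] by blast
        then show ?thesis using G(3)[OF l2] l(2) by simp
      qed
    qed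
  qed
  then show ?thesis using ty by simp
qed




lemma dir2:
  fixes ends :: "'e::finite \<Rightarrow> 'v set" and k :: nat
  assumes "t \<in> {t. \<exists>(d'::nat) (i::nat \<Rightarrow> 'e).
          d' \<le> CARD('e) - k \<and>
          inj_on i {1..d'+1} \<and>
          (\<exists>B. graphic_basis ends B \<and> B \<subseteq> UNIV - i ` {1..d'}) \<and>
          t (i 1) = bcount ends {i 1} {} + bcount ends {} (i ` {1..d'+1}) \<and>
          (\<forall>l\<in>{2..d'+1}. t (i l) = bcount ends {i l} (i ` {1..<l})) \<and>
          (\<forall>j. j \<notin> i ` {1..d'+1} \<longrightarrow> t j = 0)}"
  shows "\<exists>y. minimal_pt {B. graphic_basis ends B} (\<lambda>B. - e_set B) y \<and>
             t = ctype {B. graphic_basis ends B} (\<lambda>B. - e_set B) y"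
proof -
  let ?N = "{B. graphic_basis ends B}"
  let ?v = "\<lambda>B. - e_set B :: real ^ 'e"
  from assms obtain d' and i :: "nat \<Rightarrow> 'e" where
    inj: "inj_on i {1..d'+1}" and
    t1: "t (i 1) = bcount ends {i 1} {} + bcount ends {} (i ` {1..d'+1})" and
    t2: "\<forall>l\<in>{2..d'+1}. t (i l) = bcount ends {i l} (i ` {1..<l})" and
    t3: "\<forall>j. j \<notin> i ` {1..d'+1} \<longrightarrow> t j = 0"
    by blast
  define n where "n = d' + 1"
  define S where "S = i ` {1..n}"
  obtain g where g: "bij_betw g (UNIV :: 'e set) {0..<CARD('e)}"
    using ex_bij_betw_finite_nat[of "UNIV :: 'e set"] by auto
  then have ginj: "inj g" and glt: "\<And>j. g j < CARD('e)" by (auto simp: bij_betw_def)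
  define q where "q l = real l / (real n + 1)" for l :: nat
  define ov where "ov j = real (g j) / (real CARD('e) + 1)" for j
  define z :: "real ^ 'e" where
    "z = (\<chi> j. if j \<in> S then - q (inv_into {1..n} i j) else -3 + ov j)"
  have inj': "inj_on i {1..n}" using inj by (simp add: n_def)
  have zS: "z$(i l) = - q l" if "l \<in> {1..n}" for l
    using that inj' by (simp add: z_def S_def inv_into_f_f)
  have zO: "z$j = -3 + ov j" if "j \<notin> S" for j using that by (simp add: z_def)
  have npos: "real n + 1 > 0" by simp
  have q01: "0 < q l \<and> q l < 1" if "l \<in> {1..n}" for l
    using that npos by (auto simp: q_def divide_less_eq_1_pos)
  have qmono: "q l < q l'" if "l < l'" for l l'
    using that npos by (simp add: q_def divide_strict_right_mono)
  have ov01: "0 \<le> ov j \<and> ov j < 1" for j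
  proof -
    have "real (g j) < real CARD('e) + 1" using glt[of j] by simp
    then show ?thesis by (simp add: ov_def divide_less_eq_1_pos)
  qed
  have ovinj: "ov j = ov j' \<Longrightarrow> j = j'" for j j'
  proof -
    assume "ov j = ov j'"
    then have "real (g j) = real (g j')"
      unfolding ov_def by (simp add: divide_cancel_right add_nonneg_eq_0_iff)
    then show "j = j'" using ginj by (simp add: inj_def)
  qed
  have Sinv: "j \<in> S \<Longrightarrow> \<exists>l\<in>{1..n}. j = i l" for j by (auto simp: S_def)
  have gz: "gen z"
    unfolding gen_def
  proof (intro allI impI conjI)
    fix p p' :: 'e assume ne: "p \<noteq> p'"
    have "z$p \<noteq> z$p' \<and> z$p \<noteq> z$p' + 1"
    proof (cases "p \<in> S")
      case True
      then obtain l where l: "l \<in> {1..n}" "p = i l" using Sinv by blast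
      show ?thesis
      proof (cases "p' \<in> S")
        case True
        then obtain l' where l': "l' \<in> {1..n}" "p' = i l'" using Sinv by blast
        have "l \<noteq> l'" using ne l l' by auto
        then have "q l \<noteq> q l'" using qmono by (metis less_irrefl nat_neq_iff)
        then show ?thesis using zS[OF l(1)] zS[OF l'(1)] q01[OF l(1)] q01[OF l'(1)] l(2) l'(2) by auto
      next
        case False
        then show ?thesis using zS[OF l(1)] zO[OF False] q01[OF l(1)] ov01[of p'] l(2) by auto
      qed
    next
      case False
      note pS = False
      show ?thesis
      proof (cases "p' \<in> S")
        case True
        then obtain l' where l': "l' \<in> {1..n}" "p' = i l'" using Sinv by blast
        show ?thesis using zS[OF l'(1)] zO[OF pS] q01[OF l'(1)] ov01[of p] l'(2) by auto
      next
        case False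
        have "ov p \<noteq> ov p'" using ovinj ne by blast
        then show ?thesis using zO[OF pS] zO[OF False] ov01[of p] ov01[of p'] by auto
      qed
    qed
    then show "z$p \<noteq> z$p'" "z$p \<noteq> z$p' + 1" by auto
  qed
  have n1: "1 \<in> {1..n}" by (simp add: n_def)
  have amax: "\<forall>j. z$j \<le> z$(i 1)"
  proof
    fix j show "z$j \<le> z$(i 1)"
    proof (cases "j \<in> S")
      case True
      then obtain l where l: "l \<in> {1..n}" "j = i l" using Sinv by blast
      have "q 1 \<le> q l" using qmono[of 1 l] l(1) by (cases "l = 1") auto
      then show ?thesis using zS[OF l(1)] zS[OF n1] l(2) by simp
    next
      case False
      then show ?thesis using zO[OF False] zS[OF n1] q01[OF n1] ov01[of j] by simp
    qed
  qed
  have Aeq: "S = {j. z$(i 1) - 1 < z$j}"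
  proof (intro set_eqI iffI)
    fix j assume "j \<in> S"
    then obtain l where l: "l \<in> {1..n}" "j = i l" using Sinv by blast
    then show "j \<in> {j. z$(i 1) - 1 < z$j}" using zS[OF l(1)] zS[OF n1] q01[OF l(1)] q01[OF n1] by simp
  next
    fix j assume j: "j \<in> {j. z$(i 1) - 1 < z$j}"
    show "j \<in> S"
    proof (rule ccontr)
      assume "j \<notin> S"
      then show False using j zO zS[OF n1] q01[OF n1] ov01[of j] by auto
    qed
  qed
  have bij: "bij_betw i {1..n} S" using inj' by (simp add: S_def bij_betw_def)
  have dec: "\<forall>l\<in>{1..n}. \<forall>l'\<in>{1..n}. l < l' \<longrightarrow> z$(i l') < z$(i l)"
    using zS qmono by auto
  note G = gen_ctype[OF gz amax Aeq bij dec]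
  have "ctype ?N ?v z = t"
  proof
    fix j
    show "ctype ?N ?v z j = t j"
    proof (cases "j \<in> S")
      case True
      then obtain l where l: "l \<in> {1..n}" "j = i l" using Sinv by blast
      show ?thesis
      proof (cases "l = 1")
        case True
        then show ?thesis using G(2) t1 l(2) by (simp add: bcount_bc S_def n_def)
      next
        case False
        then have l2: "l \<in> {2..n}" using l(1) by auto
        then show ?thesis using G(3)[OF l2] t2 l(2) by (simp add: bcount_bc n_def)
      qed
    next
      case False
      then show ?thesis using G(4)[OF False] t3 by (simp add: S_def n_def)
    qed
  qed
  then show ?thesis using gen_minimal[OF gz] by metis
qed

theorem mainTheorem1:
  fixes Vs :: "'v set" and ends :: "'e::finite \<Rightarrow> 'v set" and k :: nat
  assumes "simple_graph Vs ends"
    and "connected_graph Vs ends"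
    and "\<forall>e. \<not> is_bridge ends e"
    and "\<forall>B. graphic_basis ends B \<longrightarrow> card B = k"
  shows "max_cell_ctypes {B. graphic_basis ends B} (\<lambda>B. - e_set B) =
    {t. \<exists>(d'::nat) (i::nat \<Rightarrow> 'e).
          d' \<le> CARD('e) - k \<and>
          inj_on i {1..d'+1} \<and>
          (\<exists>B. graphic_basis ends B \<and> B \<subseteq> UNIV - i ` {1..d'}) \<and>
          t (i 1) = bcount ends {i 1} {} + bcount ends {} (i ` {1..d'+1}) \<and>
          (\<forall>l\<in>{2..d'+1}. t (i l) = bcount ends {i l} (i ` {1..<l})) \<and>
          (\<forall>j. j \<notin> i ` {1..d'+1} \<longrightarrow> t j = 0)}"
  unfolding max_cell_ctypes_char
proof (intro set_eqI iffI)
  fix t assume "t \<in> {ctype {B. graphic_basis ends B} (\<lambda>B. - e_set B) y |y.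
      minimal_pt {B. graphic_basis ends B} (\<lambda>B. - e_set B) y}"
  then obtain y where "t = ctype {B. graphic_basis ends B} (\<lambda>B. - e_set B) y"
    "minimal_pt {B. graphic_basis ends B} (\<lambda>B. - e_set B) y" by blast
  then show "t \<in> {t. \<exists>(d'::nat) (i::nat \<Rightarrow> 'e).
          d' \<le> CARD('e) - k \<and>
          inj_on i {1..d'+1} \<and>
          (\<exists>B. graphic_basis ends B \<and> B \<subseteq> UNIV - i ` {1..d'}) \<and>
          t (i 1) = bcount ends {i 1} {} + bcount ends {} (i ` {1..d'+1}) \<and>
          (\<forall>l\<in>{2..d'+1}. t (i l) = bcount ends {i l} (i ` {1..<l})) \<and>
          (\<forall>j. j \<notin> i ` {1..d'+1} \<longrightarrow> t j = 0)}"
    using dir1[OF assms(4)] by simp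
next
  fix t assume "t \<in> {t. \<exists>(d'::nat) (i::nat \<Rightarrow> 'e).
          d' \<le> CARD('e) - k \<and>
          inj_on i {1..d'+1} \<and>
          (\<exists>B. graphic_basis ends B \<and> B \<subseteq> UNIV - i ` {1..d'}) \<and>
          t (i 1) = bcount ends {i 1} {} + bcount ends {} (i ` {1..d'+1}) \<and>
          (\<forall>l\<in>{2..d'+1}. t (i l) = bcount ends {i l} (i ` {1..<l})) \<and>
          (\<forall>j. j \<notin> i ` {1..d'+1} \<longrightarrow> t j = 0)}"
  then show "t \<in> {ctype {B. graphic_basis ends B} (\<lambda>B. - e_set B) y |y.
      minimal_pt {B. graphic_basis ends B} (\<lambda>B. - e_set B) y}"
    using dir2[of t k ends] by blast
qed


end
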